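(* Let $(\mathcal{X},\mathcal{A})$ be a measurable space and $\pi$ a probability distribution of a random pair $(X,Y)$ on $\mathcal{X}\times\{-1,1\}$. Let $1\le\kappa<+\infty$. Then $\pi$ satisfies the margin assumption $\mathrm{MA}(\kappa)$ if and only if $\pi$ satisfies the margin assumption for hinge risk $\mathrm{MAH}(\kappa)$.
   Context: Let $\eta(x)=\mathbb{P}(Y=1\mid X=x)$ and let $f^*(x)=\mathrm{sign}(2\eta(x)-1)$ be the Bayes rule. For a measurable $f:\mathcal{X}\to\{-1,1\}$, $R(f)=\mathbb{P}(Y\neq f(X))$ and $R^*=R(f^* )=\min_f R(f)$. For a measurable $f:\mathcal{X}\to\mathbb{R}$, the hinge risk is $A(f)=\mathbb{E}[\max(1-Yf(X),0)]$ and $A^*=\inf_{f:\mathcal{X}\to\mathbb{R}}A(f)$ (attained at $f^*$). $\pi$ satisfies $\mathrm{MA}(\kappa)$ if there exists $c_0>0$ such that $\mathbb{E}[|f(X)-f^*(X)|]\le c_0(R(f)-R^* )^{1/\kappa}$ for every measurable $f:\mathcal{X}\to\{-1,1\}$. $\pi$ satisfies $\mathrm{MAH}(\kappa)$ if there exists $c>0$ such that $\mathbb{E}[|f(X)-f^*(X)|]\le c(A(f)-A^* )^{1/\kappa}$ for every measurable $f:\mathcal{X}\to[-1,1]$. *)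

theory Defs
  imports "HOL-Probability.Probability"
begin

text \<open>Setting: M is the measurable space (X, A); P is a probability measure on
  X \<times> {-1,1} (labels encoded as the reals -1 and 1); the pair (X,Y) is (fst, snd).\<close>

definition marginal :: "('a \<times> real) measure \<Rightarrow> 'a measure \<Rightarrow> 'a measure" where
  "marginal P M = distr P M fst"

text \<open>eta(x) = P(Y = 1 | X = x), as the Radon-Nikodym derivative of
  A \<mapsto> P(X \<in> A, Y = 1) with respect to P_X.\<close>
definition eta :: "('a \<times> real) measure \<Rightarrow> 'a measure \<Rightarrow> 'a \<Rightarrow> real" where
  "eta P M = (\<lambda>x. enn2real (RN_deriv (marginal P M)
      (distr (density P (\<lambda>z. indicator {z. snd z = 1} z)) M fst) x))"

definition bayes :: "('a \<times> real) measure \<Rightarrow> 'a measure \<Rightarrow> 'a \<Rightarrow> real" where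
  "bayes P M = (\<lambda>x. if 2 * eta P M x - 1 \<ge> 0 then 1 else -1)"

definition risk :: "('a \<times> real) measure \<Rightarrow> ('a \<Rightarrow> real) \<Rightarrow> real" where
  "risk P f = measure P {z \<in> space P. snd z \<noteq> f (fst z)}"

definition bayes_risk :: "('a \<times> real) measure \<Rightarrow> 'a measure \<Rightarrow> real" where
  "bayes_risk P M = risk P (bayes P M)"

definition hinge_risk :: "('a \<times> real) measure \<Rightarrow> ('a \<Rightarrow> real) \<Rightarrow> ennreal" where
  "hinge_risk P f = (\<integral>\<^sup>+ z. ennreal (max (1 - snd z * f (fst z)) 0) \<partial>P)"

definition hinge_risk_opt :: "('a \<times> real) measure \<Rightarrow> 'a measure \<Rightarrow> ennreal" where
  "hinge_risk_opt P M = (INF f \<in> borel_measurable M. hinge_risk P f)"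

definition dist_bayes :: "('a \<times> real) measure \<Rightarrow> 'a measure \<Rightarrow> ('a \<Rightarrow> real) \<Rightarrow> real" where
  "dist_bayes P M f = (\<integral> z. \<bar>f (fst z) - bayes P M (fst z)\<bar> \<partial>P)"

definition MA :: "('a \<times> real) measure \<Rightarrow> 'a measure \<Rightarrow> real \<Rightarrow> bool" where
  "MA P M \<kappa> \<longleftrightarrow> (\<exists>c0>0. \<forall>f \<in> borel_measurable M.
      (\<forall>x \<in> space M. f x \<in> {-1, 1}) \<longrightarrow>
      dist_bayes P M f \<le> c0 * (risk P f - bayes_risk P M) powr (1 / \<kappa>))"

definition MAH :: "('a \<times> real) measure \<Rightarrow> 'a measure \<Rightarrow> real \<Rightarrow> bool" where
  "MAH P M \<kappa> \<longleftrightarrow> (\<exists>c>0. \<forall>f \<in> borel_measurable M.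
      (\<forall>x \<in> space M. f x \<in> {-1..1}) \<longrightarrow>
      dist_bayes P M f \<le> c * (enn2real (hinge_risk P f) - enn2real (hinge_risk_opt P M)) powr (1 / \<kappa>))"

end

theory Submission imports Defs begin

locale setting =
  fixes M :: "'a measure" and P :: "('a \<times> real) measure"
  assumes prob: "prob_space P"
    and setsP: "sets P = sets (M \<Otimes>\<^sub>M count_space {-1, 1})"
begin

interpretation P: prob_space P by (rule prob)

lemma spaceP: "space P = space M \<times> {-1,1}"
  using sets_eq_imp_space_eq[OF setsP] by (simp add: space_pair_measure)

lemma fst_meas[measurable]: "fst \<in> measurable P M"
  using measurable_cong_sets[OF setsP refl] measurable_fst by blast

lemma snd_meas[measurable]: "snd \<in> measurable P (count_space {-1,1})"
  using measurable_cong_sets[OF setsP refl] measurable_snd by blast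

lemma snd_borel[measurable]: "snd \<in> borel_measurable P"
proof -
  have "(\<lambda>z. (\<lambda>y::real. y) (snd z)) \<in> borel_measurable P"
    by (rule measurable_compose[OF snd_meas]) simp
  then show ?thesis by simp
qed

lemma sndP: assumes "z \<in> space P" shows "snd z = -1 \<or> snd z = 1"
proof -
  have "z \<in> space M \<times> {-1,1}" using assms spaceP by blast
  then show ?thesis by (auto simp: mem_Times_iff)
qed

lemma fstP: assumes "z \<in> space P" shows "fst z \<in> space M"
proof -
  have "z \<in> space M \<times> {-1,1}" using assms spaceP by blast
  then show ?thesis by (auto simp: mem_Times_iff)
qed

abbreviation "mu \<equiv> marginal P M"
abbreviation "Yset \<equiv> {z::'a\<times>real. snd z = 1}"
abbreviation "nu \<equiv> distr (density P (\<lambda>z. indicator Yset z)) M fst"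

lemma Yset_meas[measurable]: "Yset \<inter> space P \<in> sets P"
proof -
  have "{z \<in> space P. snd z = 1} \<in> sets P" by measurable
  then show ?thesis by (simp add: Int_commute Collect_conj_eq)
qed

lemma mu_prob: "prob_space mu"
  unfolding marginal_def by (rule P.prob_space_distr) simp

interpretation mu: prob_space mu by (rule mu_prob)

lemma sets_mu[simp]: "sets mu = sets M" by (simp add: marginal_def)
lemma space_mu[simp]: "space mu = space M" by (simp add: marginal_def)

lemma sets_nu: "sets nu = sets mu" by simp

lemma ind_meas[measurable]: "(\<lambda>z. indicator Yset z :: ennreal) \<in> borel_measurable P"
proof -
  have "(\<lambda>z. indicator Yset z :: ennreal) = (\<lambda>z. if snd z = 1 then 1 else 0)"
    by (auto simp: indicator_def)
  moreover have "(\<lambda>z. if snd z = 1 then 1 else (0::ennreal)) \<in> borel_measurable P" by measurable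
  ultimately show ?thesis by simp
qed

lemma nu_finite: "finite_measure nu"
proof
  have "emeasure nu (space nu) = emeasure (density P (\<lambda>z. indicator Yset z)) (space P)"
    using measurable_space[OF fst_meas] by (simp add: emeasure_distr Int_absorb1 subset_eq vimage_def)
  also have "\<dots> = (\<integral>\<^sup>+ z. indicator Yset z * indicator (space P) z \<partial>P)"
    by (simp add: emeasure_density)
  also have "\<dots> \<le> (\<integral>\<^sup>+ z. 1 \<partial>P)"
    by (intro nn_integral_mono) (auto simp: indicator_def)
  also have "\<dots> < \<infinity>" using P.emeasure_space_1 by simp
  finally show "emeasure nu (space nu) \<noteq> \<infinity>" by simp
qed

lemma ac: "absolutely_continuous mu nu"
  unfolding absolutely_continuous_def
proof
  fix A assume A: "A \<in> null_sets mu"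
  then have As: "A \<in> sets M" and A0: "emeasure P (fst -` A \<inter> space P) = 0"
    by (auto simp: marginal_def null_sets_def emeasure_distr)
  have "emeasure nu A = (\<integral>\<^sup>+ z. indicator Yset z * indicator (fst -` A \<inter> space P) z \<partial>P)"
    using As by (simp add: emeasure_distr emeasure_density)
  also have "\<dots> \<le> (\<integral>\<^sup>+ z. indicator (fst -` A \<inter> space P) z \<partial>P)"
    by (intro nn_integral_mono) (auto simp: indicator_def)
  also have "\<dots> = 0" using A0 As by simp
  finally show "A \<in> null_sets nu" using As by (auto simp: null_sets_def)
qed

lemma sets_nu': "sets nu = sets mu" by simp

interpretation nu: finite_measure nu by (rule nu_finite)

abbreviation "et \<equiv> eta P M"

lemma et_eq: "et = (\<lambda>x. enn2real (RN_deriv mu nu x))"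
  by (simp add: eta_def)

lemma et_meas[measurable]: "et \<in> borel_measurable M"
proof -
  have "(\<lambda>x. enn2real (RN_deriv mu nu x)) \<in> borel_measurable mu"
    by (intro borel_measurable_enn2real borel_measurable_RN_deriv)
  then show ?thesis unfolding et_eq measurable_cong_sets[OF sets_mu refl, of borel] .
qed

lemma dens_eq: "density P (\<lambda>z. indicator Yset z) = density P (\<lambda>z. ennreal (indicator Yset z))"
  by (simp only: ennreal_indicator)

lemma L1:
  fixes v :: "'a \<Rightarrow> real"
  assumes vm[measurable]: "v \<in> borel_measurable M" and vb: "\<And>x. x \<in> space M \<Longrightarrow> \<bar>v x\<bar> \<le> B"
  shows "integrable mu v" "integrable mu (\<lambda>x. et x * v x)"
    "integrable P (\<lambda>z. v (fst z))"
    "(\<integral>z. v (fst z) \<partial>P) = (\<integral>x. v x \<partial>mu)"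
    "(\<integral>z. indicator Yset z * v (fst z) \<partial>P) = (\<integral>x. et x * v x \<partial>mu)"
    "(\<integral>z. snd z * v (fst z) \<partial>P) = (\<integral>x. (2 * et x - 1) * v x \<partial>mu)"
proof -
  have vmu[measurable]: "v \<in> borel_measurable mu" using vm unfolding measurable_cong_sets[OF sets_mu refl, of borel] .
  show i1: "integrable mu v"
    by (rule mu.integrable_const_bound[where B=B]) (use vb in auto)
  have inu: "integrable nu v"
    by (rule nu.integrable_const_bound[where B=B]) (use vb in auto)
  show i2: "integrable mu (\<lambda>x. et x * v x)"
    using inu mu.RN_deriv_integrable[OF nu.sigma_finite_measure ac sets_nu' vmu]
    unfolding et_eq by simp
  show i3: "integrable P (\<lambda>z. v (fst z))"
    by (rule P.integrable_const_bound[where B=B]) (use vb measurable_space[OF fst_meas] in auto)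
  show e1: "(\<integral>z. v (fst z) \<partial>P) = (\<integral>x. v x \<partial>mu)"
    unfolding marginal_def by (rule integral_distr[symmetric]) auto
  have "(\<integral>x. et x * v x \<partial>mu) = integral\<^sup>L nu v"
    using mu.RN_deriv_integral[OF nu.sigma_finite_measure ac sets_nu' vmu]
    unfolding et_eq by simp
  also have "\<dots> = (\<integral>z. v (fst z) \<partial>density P (\<lambda>z. indicator Yset z))"
    by (rule integral_distr) auto
  also have "\<dots> = (\<integral>z. indicator Yset z * v (fst z) \<partial>P)"
    unfolding dens_eq
    by (subst integral_density) (auto simp: borel_measurable_indicator_iff)
  finally show e2: "(\<integral>z. indicator Yset z * v (fst z) \<partial>P) = (\<integral>x. et x * v x \<partial>mu)" by simp
  have im[measurable]: "(\<lambda>z. indicator Yset z :: real) \<in> borel_measurable P"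
    unfolding borel_measurable_indicator_iff by (rule Yset_meas)
  have i4: "integrable P (\<lambda>z. indicator Yset z * v (fst z))"
  proof (rule P.integrable_const_bound[where B="\<bar>B\<bar>"])
    show "AE z in P. norm (indicator Yset z * v (fst z)) \<le> \<bar>B\<bar>"
    proof (rule AE_I2)
      fix z assume z: "z \<in> space P"
      have "\<bar>v (fst z)\<bar> \<le> B" by (rule vb[OF fstP[OF z]])
      then show "norm (indicator Yset z * v (fst z)) \<le> \<bar>B\<bar>" by (auto simp: indicator_def)
    qed
  qed measurable
  have "(\<integral>z. snd z * v (fst z) \<partial>P) = (\<integral>z. 2 * (indicator Yset z * v (fst z)) - v (fst z) \<partial>P)"
  proof (rule Bochner_Integration.integral_cong)
    fix z assume z: "z \<in> space P"
    show "snd z * v (fst z) = 2 * (indicator Yset z * v (fst z)) - v (fst z)"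
      using sndP[OF z] by (auto simp: indicator_def)
  qed simp
  also have "\<dots> = 2 * (\<integral>x. et x * v x \<partial>mu) - (\<integral>x. v x \<partial>mu)"
    using i3 i4 e1 e2 by simp
  also have "\<dots> = (\<integral>x. 2 * (et x * v x) - v x \<partial>mu)"
    using i1 i2 by (simp add: Bochner_Integration.integral_diff)
  also have "\<dots> = (\<integral>x. (2 * et x - 1) * v x \<partial>mu)"
    by (rule Bochner_Integration.integral_cong) (simp_all add: algebra_simps)
  finally show "(\<integral>z. snd z * v (fst z) \<partial>P) = (\<integral>x. (2 * et x - 1) * v x \<partial>mu)" .
qed

abbreviation "bs \<equiv> bayes P M"

lemma bs_meas[measurable]: "bs \<in> borel_measurable M"
  unfolding bayes_def by measurable

lemma bs_val: "bs x = 1 \<or> bs x = -1"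
  by (simp add: bayes_def)

lemma a_eq: "\<bar>2 * et x - 1\<bar> * \<bar>f - bs x\<bar> = (2 * et x - 1) * (bs x - f)" if "-1 \<le> f" "f \<le> 1"
  using that by (auto simp: bayes_def abs_if algebra_simps)

lemma Lint:
  fixes v :: "'a \<Rightarrow> real"
  assumes vm[measurable]: "v \<in> borel_measurable M" and vb: "\<And>x. x \<in> space M \<Longrightarrow> \<bar>v x\<bar> \<le> B"
  shows "integrable mu (\<lambda>x. (2 * et x - 1) * v x)"
proof -
  have "integrable mu (\<lambda>x. 2 * (et x * v x) - v x)"
    using L1(1,2)[OF vm vb] by auto
  then show ?thesis by (simp add: algebra_simps)
qed

definition H :: "('a \<Rightarrow> real) \<Rightarrow> real" where
  "H f = 1 - (\<integral>x. (2 * et x - 1) * f x \<partial>mu)"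

lemma hinge_eq:
  assumes fm[measurable]: "f \<in> borel_measurable M" and fb: "\<And>x. x \<in> space M \<Longrightarrow> f x \<in> {-1..1}"
  shows "hinge_risk P f = ennreal (H f)" "0 \<le> H f"
proof -
  have fb': "\<bar>f x\<bar> \<le> 1" if "x \<in> space M" for x
  proof -
    have "f x \<in> {-1..1}" using that by (rule fb)
    then show ?thesis by auto
  qed
  have pt: "max (1 - snd z * f (fst z)) 0 = 1 - snd z * f (fst z)" if "z \<in> space P" for z
  proof -
    have "fst z \<in> space M" using that by (rule fstP)
    then show ?thesis using fb'[of "fst z"] sndP[OF that] by (auto simp: abs_if split: if_splits)
  qed
  have nn: "0 \<le> 1 - snd z * f (fst z)" if "z \<in> space P" for z
    using pt[OF that] by (metis max.cobounded2)
  have int: "integrable P (\<lambda>z. 1 - snd z * f (fst z))"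
  proof (rule P.integrable_const_bound[where B=2])
    show "AE x in P. norm (1 - snd x * f (fst x)) \<le> 2"
    proof (rule AE_I2)
      fix z assume z: "z \<in> space P"
      then have "fst z \<in> space M" by (rule fstP)
      then show "norm (1 - snd z * f (fst z)) \<le> 2"
        using fb'[of "fst z"] sndP[OF z] by (auto simp: abs_le_iff abs_mult)
    qed
  qed measurable
  have intP2: "integrable P (\<lambda>z. snd z * f (fst z))"
  proof (rule P.integrable_const_bound[where B=1])
    show "AE x in P. norm (snd x * f (fst x)) \<le> 1"
    proof (rule AE_I2)
      fix z assume z: "z \<in> space P"
      then have "fst z \<in> space M" by (rule fstP)
      then show "norm (snd z * f (fst z)) \<le> 1"
        using fb'[of "fst z"] sndP[OF z] by (auto simp: abs_le_iff abs_mult)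
    qed
  qed measurable
  have "hinge_risk P f = (\<integral>\<^sup>+ z. ennreal (1 - snd z * f (fst z)) \<partial>P)"
    unfolding hinge_risk_def by (rule nn_integral_cong) (simp add: pt)
  also have "\<dots> = ennreal (\<integral>z. 1 - snd z * f (fst z) \<partial>P)"
    by (rule nn_integral_eq_integral[OF int]) (intro AE_I2 nn)
  also have "(\<integral>z. 1 - snd z * f (fst z) \<partial>P) = 1 - (\<integral>z. snd z * f (fst z) \<partial>P)"
    using intP2 P.prob_space by (simp add: Bochner_Integration.integral_diff)
  also have "\<dots> = H f"
    unfolding H_def using L1(6)[OF fm fb'] by simp
  finally show "hinge_risk P f = ennreal (H f)" .
  have "0 \<le> (\<integral>z. 1 - snd z * f (fst z) \<partial>P)"
    by (rule integral_nonneg_AE) (intro AE_I2 nn)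
  then show "0 \<le> H f"
    using \<open>(\<integral>z. 1 - snd z * f (fst z) \<partial>P) = 1 - (\<integral>z. snd z * f (fst z) \<partial>P)\<close>
      \<open>1 - (\<integral>z. snd z * f (fst z) \<partial>P) = H f\<close> by simp
qed

lemma bs_range: "x \<in> space M \<Longrightarrow> bs x \<in> {-1..1}"
  using bs_val[of x] by auto

lemma Hdiff:
  assumes fm[measurable]: "f \<in> borel_measurable M" and fb: "\<And>x. x \<in> space M \<Longrightarrow> f x \<in> {-1..1}"
  shows "H f - H bs = (\<integral>x. \<bar>2 * et x - 1\<bar> * \<bar>f x - bs x\<bar> \<partial>mu)"
    "integrable mu (\<lambda>x. \<bar>2 * et x - 1\<bar> * \<bar>f x - bs x\<bar>)"
proof -
  have fb': "\<bar>f x\<bar> \<le> 1" if "x \<in> space M" for x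
  proof -
    have "f x \<in> {-1..1}" using that by (rule fb)
    then show ?thesis by auto
  qed
  have bb: "\<And>x. x \<in> space M \<Longrightarrow> \<bar>bs x\<bar> \<le> 1" using bs_val by (metis abs_1 abs_minus order_refl)
  have i1: "integrable mu (\<lambda>x. (2 * et x - 1) * f x)" by (rule Lint[OF fm fb'])
  have i2: "integrable mu (\<lambda>x. (2 * et x - 1) * bs x)" by (rule Lint[OF bs_meas bb])
  have "H f - H bs = (\<integral>x. (2 * et x - 1) * bs x - (2 * et x - 1) * f x \<partial>mu)"
    unfolding H_def using i1 i2 by (simp add: Bochner_Integration.integral_diff)
  also have "\<dots> = (\<integral>x. \<bar>2 * et x - 1\<bar> * \<bar>f x - bs x\<bar> \<partial>mu)"
  proof (rule Bochner_Integration.integral_cong)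
    fix x assume "x \<in> space mu"
    then have "f x \<in> {-1..1}" using fb by simp
    then show "(2 * et x - 1) * bs x - (2 * et x - 1) * f x = \<bar>2 * et x - 1\<bar> * \<bar>f x - bs x\<bar>"
      using a_eq[of "f x" x] by (simp add: right_diff_distrib)
  qed simp
  finally show "H f - H bs = (\<integral>x. \<bar>2 * et x - 1\<bar> * \<bar>f x - bs x\<bar> \<partial>mu)" .
  have "integrable mu (\<lambda>x. (2 * et x - 1) * bs x - (2 * et x - 1) * f x)"
    using i1 i2 by auto
  then show "integrable mu (\<lambda>x. \<bar>2 * et x - 1\<bar> * \<bar>f x - bs x\<bar>)"
    by (rule Bochner_Integration.integrable_cong[THEN iffD1, rotated 2]) (use fb a_eq in \<open>auto simp: right_diff_distrib\<close>)
qed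

lemma Hdiff_nonneg:
  assumes fm[measurable]: "f \<in> borel_measurable M" and fb: "\<And>x. x \<in> space M \<Longrightarrow> f x \<in> {-1..1}"
  shows "H bs \<le> H f"
proof -
  have "0 \<le> (\<integral>x. \<bar>2 * et x - 1\<bar> * \<bar>f x - bs x\<bar> \<partial>mu)"
    by (rule integral_nonneg_AE) auto
  then show ?thesis using Hdiff(1)[OF fm fb] by linarith
qed

lemma opt_eq: "hinge_risk_opt P M = ennreal (H bs)"
proof (rule antisym)
  have "hinge_risk_opt P M \<le> hinge_risk P bs"
    unfolding hinge_risk_opt_def by (rule INF_lower) simp
  then show "hinge_risk_opt P M \<le> ennreal (H bs)"
    using hinge_eq(1)[OF bs_meas bs_range] by simp
  show "ennreal (H bs) \<le> hinge_risk_opt P M"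
    unfolding hinge_risk_opt_def
  proof (rule INF_greatest)
    fix f :: "'a \<Rightarrow> real" assume fm[measurable]: "f \<in> borel_measurable M"
    define cf where "cf = (\<lambda>x. max (-1) (min 1 (f x)))"
    have cfm[measurable]: "cf \<in> borel_measurable M" unfolding cf_def by measurable
    have cfb: "\<And>x. x \<in> space M \<Longrightarrow> cf x \<in> {-1..1}" unfolding cf_def by auto
    have "ennreal (H bs) \<le> ennreal (H cf)"
      using Hdiff_nonneg[OF cfm cfb] by (rule ennreal_leI)
    also have "\<dots> = hinge_risk P cf" using hinge_eq(1)[OF cfm cfb] by simp
    also have "\<dots> \<le> hinge_risk P f"
      unfolding hinge_risk_def
    proof (rule nn_integral_mono)
      fix z assume z: "z \<in> space P"
      show "ennreal (max (1 - snd z * cf (fst z)) 0) \<le> ennreal (max (1 - snd z * f (fst z)) 0)"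
        using sndP[OF z] by (intro ennreal_leI) (auto simp: cf_def max_def min_def)
    qed
    finally show "ennreal (H bs) \<le> hinge_risk P f" .
  qed
qed

lemma risk_eq:
  assumes fm[measurable]: "f \<in> borel_measurable M" and fb: "\<And>x. x \<in> space M \<Longrightarrow> f x \<in> {-1,1}"
  shows "risk P f = H f / 2"
proof -
  have fb': "\<bar>f x\<bar> \<le> 1" if "x \<in> space M" for x
  proof -
    have "f x \<in> {-1,1}" using that by (rule fb)
    then show ?thesis by auto
  qed
  have sm: "{z \<in> space P. snd z \<noteq> f (fst z)} \<in> sets P" by measurable
  have intP2: "integrable P (\<lambda>z. snd z * f (fst z))"
  proof (rule P.integrable_const_bound[where B=1])
    show "AE x in P. norm (snd x * f (fst x)) \<le> 1"
    proof (rule AE_I2)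
      fix z assume z: "z \<in> space P"
      then have "fst z \<in> space M" by (rule fstP)
      then show "norm (snd z * f (fst z)) \<le> 1"
        using fb'[of "fst z"] sndP[OF z] by (auto simp: abs_le_iff abs_mult)
    qed
  qed measurable
  have "risk P f = (\<integral>z. indicator {z \<in> space P. snd z \<noteq> f (fst z)} z \<partial>P)"
    unfolding risk_def using sm by (simp add: Int_absorb2 sets.sets_into_space)
  also have "\<dots> = (\<integral>z. (1 - snd z * f (fst z)) / 2 \<partial>P)"
  proof (rule Bochner_Integration.integral_cong)
    fix z assume z: "z \<in> space P"
    have "f (fst z) \<in> {-1,1}" using fb[OF fstP[OF z]] by simp
    then show "indicator {z \<in> space P. snd z \<noteq> f (fst z)} z = (1 - snd z * f (fst z)) / 2"
      using sndP[OF z] z by (auto simp: indicator_def)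
  qed simp
  also have "\<dots> = (1 - (\<integral>z. snd z * f (fst z) \<partial>P)) / 2"
    using intP2 P.prob_space by (simp add: Bochner_Integration.integral_diff)
  also have "\<dots> = H f / 2"
    unfolding H_def using L1(6)[OF fm fb'] by simp
  finally show ?thesis .
qed

lemma bayes_risk_eq: "bayes_risk P M = H bs / 2"
  unfolding bayes_risk_def by (rule risk_eq) (auto simp: bayes_def)

lemma dist_eq:
  assumes fm[measurable]: "f \<in> borel_measurable M" and fb: "\<And>x. x \<in> space M \<Longrightarrow> f x \<in> {-1..1}"
  shows "dist_bayes P M f = (\<integral>x. \<bar>f x - bs x\<bar> \<partial>mu)" "integrable mu (\<lambda>x. \<bar>f x - bs x\<bar>)"
proof -
  have b: "\<bar>\<bar>f x - bs x\<bar>\<bar> \<le> 2" if "x \<in> space M" for x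
  proof -
    have "f x \<in> {-1..1}" using that by (rule fb)
    then show ?thesis using bs_val[of x] by auto
  qed
  show "dist_bayes P M f = (\<integral>x. \<bar>f x - bs x\<bar> \<partial>mu)"
    unfolding dist_bayes_def using L1(4)[of "\<lambda>x. \<bar>f x - bs x\<bar>", OF _ b] by simp
  show "integrable mu (\<lambda>x. \<bar>f x - bs x\<bar>)"
    using L1(1)[of "\<lambda>x. \<bar>f x - bs x\<bar>", OF _ b] by simp
qed

lemma classif:
  assumes S: "S \<in> sets M"
  defines "fS \<equiv> (\<lambda>x. if x \<in> S then - bs x else bs x)"
  shows "fS \<in> borel_measurable M" "\<And>x. x \<in> space M \<Longrightarrow> fS x \<in> {-1,1}"
    "dist_bayes P M fS = 2 * measure mu S"
    "integrable mu (\<lambda>x. \<bar>2 * et x - 1\<bar> * indicator S x)"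
    "risk P fS - bayes_risk P M = (\<integral>x. \<bar>2 * et x - 1\<bar> * indicator S x \<partial>mu)"
proof -
  show fm[measurable]: "fS \<in> borel_measurable M" unfolding fS_def using S by measurable
  show fv: "\<And>x. x \<in> space M \<Longrightarrow> fS x \<in> {-1,1}" unfolding fS_def using bs_val by auto
  have fb: "\<And>x. x \<in> space M \<Longrightarrow> fS x \<in> {-1..1}" using fv by fastforce
  have eqs: "\<bar>fS x - bs x\<bar> = 2 * indicator S x" for x
    unfolding fS_def using bs_val[of x] by (auto simp: indicator_def)
  have "dist_bayes P M fS = (\<integral>x. 2 * indicator S x \<partial>mu)"
    using dist_eq(1)[OF fm fb] eqs by simp
  also have "\<dots> = 2 * measure mu S" using S by simp
  finally show "dist_bayes P M fS = 2 * measure mu S" .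
  have "integrable mu (\<lambda>x. (\<bar>2 * et x - 1\<bar> * \<bar>fS x - bs x\<bar>) / 2)"
    using Hdiff(2)[OF fm fb] by simp
  then show "integrable mu (\<lambda>x. \<bar>2 * et x - 1\<bar> * indicator S x)"
    using eqs by simp
  have "risk P fS - bayes_risk P M = (H fS - H bs) / 2"
    using risk_eq[OF fm fv] bayes_risk_eq by simp
  also have "\<dots> = (\<integral>x. (\<bar>2 * et x - 1\<bar> * \<bar>fS x - bs x\<bar>) / 2 \<partial>mu)"
    using Hdiff(1)[OF fm fb] by simp
  also have "\<dots> = (\<integral>x. \<bar>2 * et x - 1\<bar> * indicator S x \<partial>mu)"
    using eqs by simp
  finally show "risk P fS - bayes_risk P M = (\<integral>x. \<bar>2 * et x - 1\<bar> * indicator S x \<partial>mu)" .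
qed

lemma MAH_imp_MA:
  assumes "MAH P M k" "1 \<le> k"
  shows "MA P M k"
proof -
  obtain c where c: "c > 0" and hc: "\<forall>f \<in> borel_measurable M.
      (\<forall>x \<in> space M. f x \<in> {-1..1}) \<longrightarrow>
      dist_bayes P M f \<le> c * (enn2real (hinge_risk P f) - enn2real (hinge_risk_opt P M)) powr (1 / k)"
    using assms(1) unfolding MAH_def by blast
  show ?thesis unfolding MA_def
  proof (intro exI[of _ "c * 2 powr (1/k)"] conjI ballI impI)
    show "0 < c * 2 powr (1/k)" using c by simp
    fix f :: "'a \<Rightarrow> real" assume fm[measurable]: "f \<in> borel_measurable M" and fv: "\<forall>x\<in>space M. f x \<in> {- 1, 1}"
    have fb: "\<And>x. x \<in> space M \<Longrightarrow> f x \<in> {-1..1}" using fv by fastforce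
    have "dist_bayes P M f \<le> c * (enn2real (hinge_risk P f) - enn2real (hinge_risk_opt P M)) powr (1 / k)"
      using hc[rule_format, OF fm] fb by blast
    also have "enn2real (hinge_risk P f) - enn2real (hinge_risk_opt P M) = H f - H bs"
      using hinge_eq[OF fm fb] opt_eq hinge_eq(2)[OF bs_meas bs_range] by simp
    also have "H f - H bs = 2 * (risk P f - bayes_risk P M)"
      using risk_eq[OF fm] fv bayes_risk_eq by simp
    also have "(2 * (risk P f - bayes_risk P M)) powr (1/k) = 2 powr (1/k) * (risk P f - bayes_risk P M) powr (1/k)"
      by (rule powr_mult)
    finally show "dist_bayes P M f \<le> c * 2 powr (1 / k) * (risk P f - bayes_risk P M) powr (1 / k)"
      by (simp add: mult.assoc)
  qed
qed

lemma MA_imp_MAH: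
  assumes "MA P M k" "1 \<le> k"
  shows "MAH P M k"
proof -
  obtain c0 where c0: "c0 > 0" and hc: "\<forall>f \<in> borel_measurable M.
      (\<forall>x \<in> space M. f x \<in> {-1, 1}) \<longrightarrow>
      dist_bayes P M f \<le> c0 * (risk P f - bayes_risk P M) powr (1 / k)"
    using assms(1) unfolding MA_def by blast
  define p where "p = 1 / k"
  have p: "0 < p" "p \<le> 1" using assms(2) by (auto simp: p_def)
  define a where "a = (\<lambda>x. \<bar>2 * et x - 1\<bar>)"
  have a_meas[measurable]: "a \<in> borel_measurable M" unfolding a_def by measurable
  have a_nn: "\<And>x. 0 \<le> a x" unfolding a_def by simp
  have T: "2 * measure mu S \<le> c0 * (\<integral>x. a x * indicator S x \<partial>mu) powr p" if S: "S \<in> sets M" for S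
  proof -
    define fS where "fS = (\<lambda>x. if x \<in> S then - bs x else bs x)"
    have "dist_bayes P M fS \<le> c0 * (risk P fS - bayes_risk P M) powr (1 / k)"
      using hc[rule_format, OF classif(1)[OF S]] classif(2)[OF S] unfolding fS_def by blast
    then show ?thesis
      using classif(3,5)[OF S] unfolding fS_def a_def p_def by simp
  qed
  have T': "2 * measure mu {x \<in> space M. a x \<le> t} \<le> c0 * (t * measure mu {x \<in> space M. a x \<le> t}) powr p"
    if t: "0 \<le> t" for t
  proof -
    define S where "S = {x \<in> space M. a x \<le> t}"
    have S: "S \<in> sets M" unfolding S_def by measurable
    have "(\<integral>x. a x * indicator S x \<partial>mu) \<le> (\<integral>x. t * indicator S x \<partial>mu)"
    proof (rule integral_mono)
      show "integrable mu (\<lambda>x. a x * indicator S x)" using classif(4)[OF S] unfolding a_def .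
      show "integrable mu (\<lambda>x. t * indicator S x)"
        using S by (intro integrable_mult_right integrable_real_indicator) (auto simp: less_top[symmetric])
      show "a x * indicator S x \<le> t * indicator S x" if "x \<in> space mu" for x
        by (auto simp: S_def indicator_def)
    qed
    also have "\<dots> = t * measure mu S" using S by simp
    finally have "(\<integral>x. a x * indicator S x \<partial>mu) powr p \<le> (t * measure mu S) powr p"
      using p by (intro powr_mono2) (auto intro!: integral_nonneg_AE simp: a_nn)
    then have "c0 * (\<integral>x. a x * indicator S x \<partial>mu) powr p \<le> c0 * (t * measure mu S) powr p"
      using c0 by simp
    with T[OF S] show ?thesis unfolding S_def by linarith
  qed
  define C where "C = (if k = 1 then c0 else 1 + 2 * (c0/2) powr (1/(1-p)))"
  have C: "C > 0" unfolding C_def using c0 by (auto intro: add_pos_nonneg)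
  show ?thesis unfolding MAH_def
  proof (intro exI[of _ C] conjI ballI impI)
    show "0 < C" by (rule C)
    fix f :: "'a \<Rightarrow> real" assume fm[measurable]: "f \<in> borel_measurable M" and fb': "\<forall>x\<in>space M. f x \<in> {- 1..1}"
    have fb: "\<And>x. x \<in> space M \<Longrightarrow> f x \<in> {-1..1}" using fb' by blast
    define g where "g = (\<lambda>x. \<bar>f x - bs x\<bar>)"
    define D where "D = (\<integral>x. a x * g x \<partial>mu)"
    have eqD: "enn2real (hinge_risk P f) - enn2real (hinge_risk_opt P M) = D"
      using hinge_eq[OF fm fb] opt_eq hinge_eq(2)[OF bs_meas bs_range] Hdiff(1)[OF fm fb]
      unfolding D_def a_def g_def by simp
    have intag: "integrable mu (\<lambda>x. a x * g x)"
      using Hdiff(2)[OF fm fb] unfolding a_def g_def .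
    have intg: "integrable mu g" using dist_eq(2)[OF fm fb] unfolding g_def .
    have dist: "dist_bayes P M f = (\<integral>x. g x \<partial>mu)" using dist_eq(1)[OF fm fb] unfolding g_def .
    have g02: "0 \<le> g x \<and> g x \<le> 2" if "x \<in> space M" for x
    proof -
      have "f x \<in> {-1..1}" using that by (rule fb)
      then show ?thesis using bs_val[of x] unfolding g_def by auto
    qed
    have D0: "0 \<le> D" unfolding D_def
      by (rule integral_nonneg_AE) (auto intro!: AE_I2 mult_nonneg_nonneg a_nn simp: g_def)
    have main: "(\<integral>x. g x \<partial>mu) \<le> C * D powr p"
    proof (cases "k = 1")
      case True
      then have p1: "p = 1" unfolding p_def by simp
      define t where "t = 1 / c0"
      define S where "S = {x \<in> space M. a x \<le> t}"
      have S: "S \<in> sets M" unfolding S_def by measurable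
      have "2 * measure mu S \<le> c0 * (t * measure mu S)"
        using T'[of t] c0 unfolding S_def t_def p1 by (simp add: powr_one)
      also have "\<dots> = measure mu S" unfolding t_def using c0 by simp
      finally have m0: "measure mu S = 0" using measure_nonneg[of mu S] by linarith
      have "(\<integral>x. g x \<partial>mu) \<le> (\<integral>x. c0 * (a x * g x) + 2 * indicator S x \<partial>mu)"
      proof (rule integral_mono)
        show "integrable mu g" by (rule intg)
        show "integrable mu (\<lambda>x. c0 * (a x * g x) + 2 * indicator S x)"
          using S intag by (intro Bochner_Integration.integrable_add integrable_mult_right integrable_real_indicator) (auto simp: less_top[symmetric])
        fix x assume x: "x \<in> space mu"
        then have x': "x \<in> space M" by simp
        have agnn: "0 \<le> c0 * (a x * g x)" using c0 a_nn[of x] g02[OF x'] by simp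
        show "g x \<le> c0 * (a x * g x) + 2 * indicator S x"
        proof (cases "a x \<le> t")
          case True
          then show ?thesis using x' g02[OF x'] agnn by (auto simp: S_def indicator_def)
        next
          case False
          then have "1 \<le> c0 * a x" using c0 unfolding t_def by (simp add: field_simps)
          then have "1 * g x \<le> (c0 * a x) * g x" using g02[OF x'] by (intro mult_right_mono) auto
          then show ?thesis by (auto simp: mult.assoc indicator_def)
        qed
      qed
      also have "\<dots> = c0 * D + 2 * measure mu S"
      proof -
        have iS: "integrable mu (\<lambda>x. 2 * indicator S x :: real)" using S
          by (intro integrable_mult_right integrable_real_indicator) (auto simp: less_top[symmetric])
        have "(\<integral>x. c0 * (a x * g x) + 2 * indicator S x \<partial>mu) = (\<integral>x. c0 * (a x * g x) \<partial>mu) + (\<integral>x. 2 * indicator S x \<partial>mu)"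
          using intag iS by (intro Bochner_Integration.integral_add) auto
        then show ?thesis using S unfolding D_def by simp
      qed
      also have "\<dots> = C * D powr p" using m0 True D0 p1 unfolding C_def by (simp add: powr_one)
      finally show ?thesis .
    next
      case False
      then have k1: "1 < k" using assms(2) by simp
      then have pl: "p < 1" unfolding p_def by simp
      define q where "q = 1 - p"
      have q: "0 < q" using pl unfolding q_def by simp
      have Cq: "C = 1 + 2 * (c0/2) powr (1/q)" unfolding C_def q_def using False by simp
      show ?thesis
      proof (cases "D = 0")
        case True
        have "AE x in mu. a x * g x = 0"
        proof -
          have "AE x in mu. 0 \<le> a x * g x"
          proof (rule AE_I2)
            fix x assume "x \<in> space mu"
            then have "0 \<le> g x" using g02 by simp
            then show "0 \<le> a x * g x" using a_nn[of x] by simp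
          qed
          then show ?thesis using integral_nonneg_eq_0_iff_AE[OF intag] True unfolding D_def by simp
        qed
        define S where "S = {x \<in> space M. a x \<le> 0}"
        have S: "S \<in> sets M" unfolding S_def by measurable
        have "2 * measure mu S \<le> 0"
          using T'[of 0] p unfolding S_def by simp
        then have m0: "measure mu S = 0" using measure_nonneg[of mu S] by linarith
        have "(\<integral>x. g x \<partial>mu) \<le> (\<integral>x. 2 * indicator S x \<partial>mu)"
        proof (rule integral_mono_AE)
          show "integrable mu g" by (rule intg)
          show "integrable mu (\<lambda>x. (2::real) * indicator S x)"
            using S by (intro integrable_mult_right integrable_real_indicator) (auto simp: less_top[symmetric])
          show "AE x in mu. g x \<le> 2 * indicator S x"
            using \<open>AE x in mu. a x * g x = 0\<close> AE_space
          proof eventually_elim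
            case (elim x)
            then have xM: "x \<in> space M" by simp
            show ?case using elim g02[OF xM] a_nn[of x]
              by (auto simp: S_def indicator_def)
          qed
        qed
        also have "\<dots> = 0" using S m0 by simp
        finally show ?thesis using True by simp
      next
        case False
        then have Dp: "0 < D" using D0 by simp
        define t where "t = D powr q"
        have t: "0 < t" unfolding t_def using Dp by simp
        define S where "S = {x \<in> space M. a x \<le> t}"
        have S: "S \<in> sets M" unfolding S_def by measurable
        define m where "m = measure mu S"
        have m0: "0 \<le> m" unfolding m_def by simp
        have Tm: "2 * m \<le> c0 * (t * m) powr p" using T'[of t] t unfolding S_def m_def by simp
        have pq: "p + q = 1" unfolding q_def by simp
        have mbound: "m \<le> (c0/2) powr (1/q) * D powr p"
        proof (cases "m = 0")
          case True then show ?thesis by simp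
        next
          case False
          then have mp: "0 < m" using m0 by simp
          have msplit: "m = m powr p * m powr q"
            using powr_add[of m p q] pq mp by (simp add: powr_one)
          have "2 * (m powr p * m powr q) \<le> c0 * (t powr p * m powr p)"
            using Tm msplit by (simp add: powr_mult)
          then have "(2 * m powr q) * m powr p \<le> (c0 * t powr p) * m powr p"
            by (simp add: algebra_simps)
          then have "2 * m powr q \<le> c0 * t powr p"
            using mp by (simp add: mult_le_cancel_right)
          then have mq: "m powr q \<le> (c0/2) * D powr (q * p)"
            unfolding t_def by (simp add: powr_powr)
          have "m = (m powr q) powr (1/q)"
            using q mp by (simp add: powr_powr powr_one)
          also have "\<dots> \<le> ((c0/2) * D powr (q * p)) powr (1/q)"
            using mq q by (intro powr_mono2) auto
          also have "\<dots> = (c0/2) powr (1/q) * (D powr (q * p)) powr (1/q)"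
            by (rule powr_mult)
          also have "(D powr (q * p)) powr (1/q) = D powr (q * p * (1/q))"
            by (rule powr_powr)
          also have "q * p * (1/q) = p" using q by (simp add: field_simps)
          finally show ?thesis .
        qed
        have "(\<integral>x. g x \<partial>mu) \<le> (\<integral>x. (a x * g x) / t + 2 * indicator S x \<partial>mu)"
        proof (rule integral_mono)
          show "integrable mu g" by (rule intg)
          show "integrable mu (\<lambda>x. (a x * g x) / t + 2 * indicator S x)"
            using S intag by (intro Bochner_Integration.integrable_add integrable_divide_zero integrable_mult_right integrable_real_indicator) (auto simp: less_top[symmetric])
          fix x assume x: "x \<in> space mu"
          then have x': "x \<in> space M" by simp
          have agnn: "0 \<le> (a x * g x) / t" using t a_nn[of x] g02[OF x'] by simp
          show "g x \<le> (a x * g x) / t + 2 * indicator S x"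
          proof (cases "a x \<le> t")
            case True
            then show ?thesis using x' g02[OF x'] agnn by (auto simp: S_def indicator_def)
          next
            case False
            then have "1 \<le> a x / t" using t by (simp add: field_simps)
            then have "1 * g x \<le> (a x / t) * g x" using g02[OF x'] by (intro mult_right_mono) auto
            then show ?thesis by (simp add: S_def indicator_def)
          qed
        qed
        also have "\<dots> = D / t + 2 * m"
        proof -
          have iS: "integrable mu (\<lambda>x. 2 * indicator S x :: real)" using S
            by (intro integrable_mult_right integrable_real_indicator) (auto simp: less_top[symmetric])
          have "(\<integral>x. (a x * g x) / t + 2 * indicator S x \<partial>mu) = (\<integral>x. (a x * g x) / t \<partial>mu) + (\<integral>x. 2 * indicator S x \<partial>mu)"
            using intag iS by (intro Bochner_Integration.integral_add) auto
          then show ?thesis using S by (simp add: D_def m_def)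
        qed
        also have "D / t = D powr p"
        proof -
          have "D = D powr p * D powr q"
            using powr_add[of D p q] pq Dp by (simp add: powr_one)
          then show ?thesis unfolding t_def using Dp by (metis nonzero_eq_divide_eq powr_gt_zero order_less_irrefl)
        qed
        also have "D powr p + 2 * m \<le> D powr p + 2 * ((c0/2) powr (1/q) * D powr p)"
          using mbound by simp
        also have "\<dots> = C * D powr p" unfolding Cq by (simp add: algebra_simps)
        finally show ?thesis .
      qed
    qed
    then show "dist_bayes P M f \<le> C * (enn2real (hinge_risk P f) - enn2real (hinge_risk_opt P M)) powr (1 / k)"
      using dist eqD unfolding p_def by simp
  qed
qed

end

theorem proposition1:
  fixes M :: "'a measure" and P :: "('a \<times> real) measure" and \<kappa> :: real
  assumes "prob_space P"
    and "sets P = sets (M \<Otimes>\<^sub>M count_space {-1, 1})"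
    and "1 \<le> \<kappa>"
  shows "MA P M \<kappa> \<longleftrightarrow> MAH P M \<kappa>"
proof -
  interpret setting M P by (rule setting.intro[OF assms(1,2)])
  show ?thesis using MA_imp_MAH MAH_imp_MA assms(3) by blast
qed

end
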